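(* Let $\mathcal{A}=\{1,\dots,K\}$ be a set of arms, let $a^*\in\mathcal{A}$ be a target arm, and for each $a\in\mathcal{A}$ let $m_a\geq 1$ be an integer and $\vec{y}_a\in\mathbb{R}^{m_a}$ a reward vector. For perturbations $\vec{\epsilon}_a\in\mathbb{R}^{m_a}$ put $\tilde{\mu}_a=(\vec{y}_a+\vec{\epsilon}_a)^T\mathbf{1}/m_a$, where $\mathbf{1}$ is the all-ones vector. Fix a margin $\xi>0$ and consider $$P_1:\quad \min_{\{\vec{\epsilon}_a\}_{a\in\mathcal{A}}}\ \sum_{a\in\mathcal{A}}\|\vec{\epsilon}_a\|_2^2\quad\text{s.t.}\quad \tilde{\mu}_{a^*}\geq \tilde{\mu}_a+\xi\ \ \forall a\neq a^*.$$ Then $P_1$ is a quadratic program with linear constraints and, for every reward instance $\{\vec{y}_a\}_{a\in\mathcal{A}}$, it has at least one optimal solution. Moreover, if the rewards of an $\epsilon$-greedy algorithm's data buffer are replaced by $\vec{y}_a+\vec{\epsilon}_a$ for such a solution, then at round $T+1$ the $\epsilon$-greedy algorithm pulls $a^*$ with probability at least $1-\frac{K-1}{K}\alpha_{T+1}$.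
   Context: Offline attack setting: a stochastic bandit algorithm pulls arms $a_1,\dots,a_T$ and receives rewards $r_t=\mu_{a_t}+\eta_t$ with zero-mean $\sigma$-subGaussian noise; $m_a$ is the number of rounds $t\le T$ with $a_t=a$ and $\vec{y}_a=(r_t:a_t=a)^T$. An attacker replaces each $r_t$ by $r_t+\epsilon_t$ (so arm $a$'s rewards become $\vec{y}_a+\vec{\epsilon}_a$) before the algorithm updates; $\tilde{\mu}_a$ is then the post-attack empirical mean of arm $a$. The $\epsilon$-greedy algorithm with rate function $\alpha_t\in[0,1]$ at round $t$ pulls an arm drawn uniformly from $\mathcal{A}$ with probability $\alpha_t$, and otherwise pulls $\arg\max_a$ of the current empirical means. *)

theory Defs
  imports "HOL-Probability.Probability"
begin

text \<open>Arms are 1..K. Arm a has m a rewards y a 0, ..., y a (m a - 1);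
  perturbation eps a i is added to y a i.\<close>

definition arms :: "nat \<Rightarrow> nat set" where
  "arms K = {1..K}"

definition post_mean :: "(nat \<Rightarrow> nat) \<Rightarrow> (nat \<Rightarrow> nat \<Rightarrow> real) \<Rightarrow> (nat \<Rightarrow> nat \<Rightarrow> real) \<Rightarrow> nat \<Rightarrow> real" where
  "post_mean m y eps a = (\<Sum>i<m a. y a i + eps a i) / real (m a)"

definition attack_cost :: "nat \<Rightarrow> (nat \<Rightarrow> nat) \<Rightarrow> (nat \<Rightarrow> nat \<Rightarrow> real) \<Rightarrow> real" where
  "attack_cost K m eps = (\<Sum>a\<in>arms K. \<Sum>i<m a. (eps a i)^2)"

definition P1_feasible :: "nat \<Rightarrow> (nat \<Rightarrow> nat) \<Rightarrow> (nat \<Rightarrow> nat \<Rightarrow> real) \<Rightarrow> nat \<Rightarrow> real \<Rightarrow> (nat \<Rightarrow> nat \<Rightarrow> real) \<Rightarrow> bool" where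
  "P1_feasible K m y astar xi eps \<longleftrightarrow>
     (\<forall>a\<in>arms K. a \<noteq> astar \<longrightarrow> post_mean m y eps astar \<ge> post_mean m y eps a + xi)"

definition P1_optimal :: "nat \<Rightarrow> (nat \<Rightarrow> nat) \<Rightarrow> (nat \<Rightarrow> nat \<Rightarrow> real) \<Rightarrow> nat \<Rightarrow> real \<Rightarrow> (nat \<Rightarrow> nat \<Rightarrow> real) \<Rightarrow> bool" where
  "P1_optimal K m y astar xi eps \<longleftrightarrow> P1_feasible K m y astar xi eps \<and>
     (\<forall>eps'. P1_feasible K m y astar xi eps' \<longrightarrow> attack_cost K m eps \<le> attack_cost K m eps')"

text \<open>One round of epsilon-greedy with exploration rate alpha: with probability alpha an arm
  uniform on the arm set, otherwise the greedy arm g (an argmax of the current empirical means;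
  the tie-breaking rule is left arbitrary, see the theorem).\<close>

definition eps_greedy_pull :: "nat \<Rightarrow> real \<Rightarrow> nat \<Rightarrow> nat pmf" where
  "eps_greedy_pull K alpha g =
     bernoulli_pmf alpha \<bind> (\<lambda>explore. if explore then pmf_of_set (arms K) else return_pmf g)"

definition is_argmax :: "nat set \<Rightarrow> (nat \<Rightarrow> real) \<Rightarrow> nat \<Rightarrow> bool" where
  "is_argmax A mu g \<longleftrightarrow> g \<in> A \<and> (\<forall>b\<in>A. mu b \<le> mu g)"

end

theory Submission imports Defs begin

lemma cs_mean:
  fixes e :: "nat \<Rightarrow> real" assumes "n \<ge> 1"
  shows "real n * ((\<Sum>i<n. e i) / real n)^2 \<le> (\<Sum>i<n. (e i)^2)"
proof -
  define d where "d = (\<Sum>i<n. e i) / real n"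
  have s: "(\<Sum>i<n. e i) = real n * d" using assms by (simp add: d_def)
  have "0 \<le> (\<Sum>i<n. (e i - d)^2)" by (simp add: sum_nonneg)
  also have "\<dots> = (\<Sum>i<n. (e i)^2) - 2 * d * (\<Sum>i<n. e i) + real n * d^2"
    by (simp add: power2_diff sum.distrib sum_subtractf sum_distrib_left algebra_simps)
  finally show ?thesis using s unfolding d_def[symmetric] by (simp add: power2_eq_square algebra_simps)
qed

lemma post_mean_split:
  assumes "m a \<ge> 1"
  shows "post_mean m y eps a = (\<Sum>i<m a. y a i) / real (m a) + (\<Sum>i<m a. eps a i) / real (m a)"
  unfolding post_mean_def by (simp add: sum.distrib add_divide_distrib)

lemma pull_prob:
  assumes "0 \<le> alpha" "alpha \<le> 1" "astar \<in> arms K"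
  shows "pmf (eps_greedy_pull K alpha astar) astar = 1 - (real K - 1) / real K * alpha"
proof -
  have K: "K \<ge> 1" using assms(3) by (simp add: arms_def)
  have fin: "finite (arms K)" "arms K \<noteq> {}" "card (arms K) = K" using assms(3) by (auto simp: arms_def)
  have "pmf (eps_greedy_pull K alpha astar) astar = alpha / real K + (1 - alpha)"
    unfolding eps_greedy_pull_def using assms fin by (simp add: pmf_bind)
  also have "\<dots> = 1 - (real K - 1) / real K * alpha" using K by (simp add: field_simps)
  finally show ?thesis .
qed


theorem theorem1:
  fixes K :: nat and astar :: nat and m :: "nat \<Rightarrow> nat" and y :: "nat \<Rightarrow> nat \<Rightarrow> real"
    and xi :: real and alpha :: real
  assumes "astar \<in> arms K"
    and "\<forall>a\<in>arms K. m a \<ge> 1"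
    and "xi > 0"
    and "0 \<le> alpha" and "alpha \<le> 1"
  shows "(\<exists>eps. P1_optimal K m y astar xi eps) \<and>
         (\<forall>eps g. P1_optimal K m y astar xi eps \<longrightarrow>
            is_argmax (arms K) (post_mean m y eps) g \<longrightarrow>
            pmf (eps_greedy_pull K alpha g) astar \<ge> 1 - (real K - 1) / real K * alpha)"
proof
  have fin: "finite (arms K)" by (simp add: arms_def)
  have mA: "m astar \<ge> 1" using assms(1,2) by auto
  define c where "c a = (\<Sum>i<m a. y a i) / real (m a)" for a
  define w where "w a t = max 0 (c a + xi - c astar - t)" for a t
  define phi where "phi t = real (m astar) * t^2 + (\<Sum>a\<in>arms K - {astar}. real (m a) * (w a t)^2)" for t
  define mn where "mn e a = (\<Sum>i<m a. e a i) / real (m a)" for e :: "nat \<Rightarrow> nat \<Rightarrow> real" and a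
  have pm: "post_mean m y e a = c a + mn e a" if "a \<in> arms K" for e a
    using post_mean_split[of m a y e] assms(2) that by (simp add: c_def mn_def)
  have phi_ge: "phi t \<ge> t^2" for t
  proof -
    have "t^2 \<le> real (m astar) * t^2" using mA by (simp add: mult_le_cancel_right1)
    moreover have "0 \<le> (\<Sum>a\<in>arms K - {astar}. real (m a) * (w a t)^2)" by (simp add: sum_nonneg)
    ultimately show ?thesis by (simp add: phi_def)
  qed
  have lower: "attack_cost K m e \<ge> phi (mn e astar)" if feas: "P1_feasible K m y astar xi e" for e
  proof -
    have "(\<Sum>a\<in>arms K. real (m a) * (mn e a)^2) \<le> attack_cost K m e"
      unfolding attack_cost_def mn_def
      by (rule sum_mono) (use cs_mean assms(2) in auto)
    moreover have "(\<Sum>a\<in>arms K. real (m a) * (mn e a)^2) = real (m astar) * (mn e astar)^2 + (\<Sum>a\<in>arms K - {astar}. real (m a) * (mn e a)^2)"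
      using sum.remove[OF fin assms(1)] by blast
    moreover have "(\<Sum>a\<in>arms K - {astar}. real (m a) * (w a (mn e astar))^2) \<le> (\<Sum>a\<in>arms K - {astar}. real (m a) * (mn e a)^2)"
    proof (rule sum_mono)
      fix a assume a: "a \<in> arms K - {astar}"
      have "post_mean m y e astar \<ge> post_mean m y e a + xi" using feas a unfolding P1_feasible_def by auto
      hence "c astar + mn e astar \<ge> c a + mn e a + xi" using pm a assms(1) by auto
      hence "w a (mn e astar) \<le> \<bar>mn e a\<bar>" unfolding w_def by auto
      hence "(w a (mn e astar))^2 \<le> \<bar>mn e a\<bar>^2" by (rule power_mono) (simp add: w_def)
      thus "real (m a) * (w a (mn e astar))^2 \<le> real (m a) * (mn e a)^2" by (simp add: mult_left_mono)
    qed
    ultimately show ?thesis unfolding phi_def by linarith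
  qed
  have phi0: "phi 0 \<ge> 0" using phi_ge[of 0] by simp
  define R where "R = phi 0 + 1"
  have "continuous_on {-R..R} phi" unfolding phi_def w_def by (intro continuous_intros)
  then obtain t0 where t0: "t0 \<in> {-R..R}" "\<And>t. t \<in> {-R..R} \<Longrightarrow> phi t0 \<le> phi t"
    using continuous_attains_inf[of "{-R..R}" phi] phi0 by (auto simp: R_def)
  have tmin: "phi t0 \<le> phi t" for t
  proof (cases "t \<in> {-R..R}")
    case True thus ?thesis using t0 by auto
  next
    case False
    hence "\<bar>t\<bar> > R" by auto
    hence "R^2 < \<bar>t\<bar>^2" using phi0 R_def by (intro power_strict_mono) auto
    moreover have "R \<le> R^2" using phi0 R_def by (simp add: power2_eq_square)
    ultimately have "phi 0 < phi t" using phi_ge[of t] R_def by simp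
    thus ?thesis using t0(2)[of 0] phi0 R_def by auto
  qed
  define e0 where "e0 a i = (if a = astar then t0 else - w a t0)" for a i :: nat
  have mn0: "mn e0 a = (if a = astar then t0 else - w a t0)" if "a \<in> arms K" for a
  proof -
    have "m a \<ge> 1" using assms(2) that by auto
    thus ?thesis by (simp add: mn_def e0_def)
  qed
  have feas0: "P1_feasible K m y astar xi e0"
    unfolding P1_feasible_def
  proof (intro ballI impI)
    fix a assume "a \<in> arms K" "a \<noteq> astar"
    thus "post_mean m y e0 astar \<ge> post_mean m y e0 a + xi"
      using pm mn0 assms(1) by (simp add: w_def)
  qed
  have cost0: "attack_cost K m e0 = phi t0"
  proof -
    have "attack_cost K m e0 = (\<Sum>a\<in>arms K. real (m a) * (if a = astar then t0 else - w a t0)^2)"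
      unfolding attack_cost_def e0_def by simp
    also have "\<dots> = real (m astar) * t0^2 + (\<Sum>a\<in>arms K - {astar}. real (m a) * (if a = astar then t0 else - w a t0)^2)"
      by (subst sum.remove[OF fin assms(1)]) simp
    also have "\<dots> = phi t0" unfolding phi_def by (intro arg_cong2[where f="(+)"] refl sum.cong) auto
    finally show ?thesis .
  qed
  show "\<exists>eps. P1_optimal K m y astar xi eps"
  proof (intro exI)
    show "P1_optimal K m y astar xi e0"
      unfolding P1_optimal_def using feas0 cost0 lower tmin by (metis order_trans)
  qed
next
  show "\<forall>eps g. P1_optimal K m y astar xi eps \<longrightarrow>
            is_argmax (arms K) (post_mean m y eps) g \<longrightarrow>
            pmf (eps_greedy_pull K alpha g) astar \<ge> 1 - (real K - 1) / real K * alpha"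
  proof (intro allI impI)
    fix eps g assume o: "P1_optimal K m y astar xi eps" and g: "is_argmax (arms K) (post_mean m y eps) g"
    have "g = astar"
    proof (rule ccontr)
      assume "g \<noteq> astar"
      moreover have "g \<in> arms K" using g by (simp add: is_argmax_def)
      ultimately have "post_mean m y eps astar \<ge> post_mean m y eps g + xi"
        using o unfolding P1_optimal_def P1_feasible_def by auto
      moreover have "post_mean m y eps astar \<le> post_mean m y eps g"
        using g assms(1) by (simp add: is_argmax_def)
      ultimately show False using assms(3) by linarith
    qed
    thus "pmf (eps_greedy_pull K alpha g) astar \<ge> 1 - (real K - 1) / real K * alpha"
      using pull_prob assms by simp
  qed
qed

end
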